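(* Let $M$ be a monoid defined by a positive homogeneous presentation on a generator set $L$. Then: (i) every fundamental element $\Delta$ of $M$ is quasi-central, and the permutation of $L/\!\sim$ associated with $\Delta$ as a fundamental element coincides with the one associated with it as a quasi-central element; (ii) if $\Delta$ is fundamental and $\Delta'$ is quasi-central, then $\Delta\Delta'$ and $\Delta'\Delta$ are fundamental, with associated permutations $\sigma_{\Delta\Delta'}=\sigma_{\Delta'}\circ\sigma_\Delta$ and $\sigma_{\Delta'\Delta}=\sigma_\Delta\circ\sigma_{\Delta'}$, and one can take $(\Delta\Delta')_x=\Delta_x\Delta'$ and $(\Delta'\Delta)_x=\Delta'\Delta_{\sigma_{\Delta'}(x)}$ for $x\in L/\!\sim$. In particular $\mathcal{F}(M)\mathcal{QZ}(M)=\mathcal{QZ}(M)\mathcal{F}(M)=\mathcal{F}(M)$.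
   Context: A positive homogeneous presentation consists of generators $L$ and relations $R=S$ with $R,S$ positive words in $L$ of equal length; $M$ is the quotient of the free monoid $L^*$ by the congruence generated by these relations. $L/\!\sim$ is the quotient of $L$ by the equivalence generated by relations equating two letters; its elements are regarded as elements of $M$. $\Delta\in M$ is quasi-central if there is a permutation $\sigma_\Delta$ of $L/\!\sim$ with $x\Delta=\Delta\sigma_\Delta(x)$ for all $x\in L/\!\sim$; $\mathcal{QZ}(M)$ is the set of quasi-central elements. $\Delta\in M$ is fundamental if there is a permutation $\sigma_\Delta$ of $L/\!\sim$ such that for each $x\in L/\!\sim$ there is $\Delta_x\in M$ with $\Delta=x\Delta_x=\Delta_x\sigma_\Delta(x)$; $\mathcal{F}(M)$ is the set of fundamental elements. *)

theory Defs
  imports Main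
begin

definition pos_hom_pres :: "'a set \<Rightarrow> ('a list \<times> 'a list) set \<Rightarrow> bool" where
  "pos_hom_pres L Rel \<longleftrightarrow>
     (\<forall>(r, s) \<in> Rel. set r \<subseteq> L \<and> set s \<subseteq> L \<and> length r = length s)"

inductive_set pcong :: "'a set \<Rightarrow> ('a list \<times> 'a list) set \<Rightarrow> ('a list \<times> 'a list) set"
  for L :: "'a set" and Rel :: "('a list \<times> 'a list) set" where
  refl: "w \<in> lists L \<Longrightarrow> (w, w) \<in> pcong L Rel"
| rel: "(r, s) \<in> Rel \<Longrightarrow> u \<in> lists L \<Longrightarrow> v \<in> lists L \<Longrightarrow> (u @ r @ v, u @ s @ v) \<in> pcong L Rel"
| sym: "(a, b) \<in> pcong L Rel \<Longrightarrow> (b, a) \<in> pcong L Rel"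
| trans: "(a, b) \<in> pcong L Rel \<Longrightarrow> (b, c) \<in> pcong L Rel \<Longrightarrow> (a, c) \<in> pcong L Rel"

definition Mon :: "'a set \<Rightarrow> ('a list \<times> 'a list) set \<Rightarrow> 'a list set set" where
  "Mon L Rel = lists L // pcong L Rel"

definition mmul :: "'a set \<Rightarrow> ('a list \<times> 'a list) set \<Rightarrow> 'a list set \<Rightarrow> 'a list set \<Rightarrow> 'a list set" where
  "mmul L Rel A B = {w. \<exists>a\<in>A. \<exists>b\<in>B. (a @ b, w) \<in> pcong L Rel}"

definition letter_eq :: "'a set \<Rightarrow> ('a list \<times> 'a list) set \<Rightarrow> ('a \<times> 'a) set" where
  "letter_eq L Rel =
     (Id_on L \<union> {(a, b). a \<in> L \<and> b \<in> L \<and> (([a], [b]) \<in> Rel \<or> ([b], [a]) \<in> Rel)})\<^sup>+"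

definition Lq :: "'a set \<Rightarrow> ('a list \<times> 'a list) set \<Rightarrow> 'a set set" where
  "Lq L Rel = L // letter_eq L Rel"

definition elt :: "'a set \<Rightarrow> ('a list \<times> 'a list) set \<Rightarrow> 'a set \<Rightarrow> 'a list set" where
  "elt L Rel C = pcong L Rel `` {[SOME x. x \<in> C]}"

definition qc_perm :: "'a set \<Rightarrow> ('a list \<times> 'a list) set \<Rightarrow> 'a list set \<Rightarrow> ('a set \<Rightarrow> 'a set) \<Rightarrow> bool" where
  "qc_perm L Rel \<Delta> \<sigma> \<longleftrightarrow> bij_betw \<sigma> (Lq L Rel) (Lq L Rel) \<and>
     (\<forall>x\<in>Lq L Rel. mmul L Rel (elt L Rel x) \<Delta> = mmul L Rel \<Delta> (elt L Rel (\<sigma> x)))"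

definition QZ :: "'a set \<Rightarrow> ('a list \<times> 'a list) set \<Rightarrow> 'a list set set" where
  "QZ L Rel = {\<Delta> \<in> Mon L Rel. \<exists>\<sigma>. qc_perm L Rel \<Delta> \<sigma>}"

definition fund_wit :: "'a set \<Rightarrow> ('a list \<times> 'a list) set \<Rightarrow> 'a list set \<Rightarrow> ('a set \<Rightarrow> 'a set)
    \<Rightarrow> ('a set \<Rightarrow> 'a list set) \<Rightarrow> bool" where
  "fund_wit L Rel \<Delta> \<sigma> D \<longleftrightarrow> bij_betw \<sigma> (Lq L Rel) (Lq L Rel) \<and>
     (\<forall>x\<in>Lq L Rel. D x \<in> Mon L Rel \<and> \<Delta> = mmul L Rel (elt L Rel x) (D x) \<and>
        \<Delta> = mmul L Rel (D x) (elt L Rel (\<sigma> x)))"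

definition Fund :: "'a set \<Rightarrow> ('a list \<times> 'a list) set \<Rightarrow> 'a list set set" where
  "Fund L Rel = {\<Delta> \<in> Mon L Rel. \<exists>\<sigma> D. fund_wit L Rel \<Delta> \<sigma> D}"

definition setmul :: "'a set \<Rightarrow> ('a list \<times> 'a list) set \<Rightarrow> 'a list set set \<Rightarrow> 'a list set set \<Rightarrow> 'a list set set" where
  "setmul L Rel X Y = {mmul L Rel a b | a b. a \<in> X \<and> b \<in> Y}"

end

theory Submission
  imports Defs
begin

lemma pcong_lists:
  assumes pres: "pos_hom_pres L Rel"
  shows "(a,b) \<in> pcong L Rel \<Longrightarrow> a \<in> lists L \<and> b \<in> lists L"
proof (induction rule: pcong.induct)
  case (rel r s u v)
  then show ?case using pres unfolding pos_hom_pres_def by fastforce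
qed auto

lemma pcong_appR:
  "(a,b) \<in> pcong L Rel \<Longrightarrow> c \<in> lists L \<Longrightarrow> (a@c, b@c) \<in> pcong L Rel"
proof (induction rule: pcong.induct)
  case (refl w) then show ?case by (simp add: pcong.refl)
next
  case (rel r s u v) then show ?case using pcong.rel[of r s Rel u L "v@c"] by simp
next
  case (sym a b) then show ?case by (simp add: pcong.sym)
next
  case (trans a b c') then show ?case by (meson pcong.trans)
qed

lemma pcong_appL:
  "(a,b) \<in> pcong L Rel \<Longrightarrow> c \<in> lists L \<Longrightarrow> (c@a, c@b) \<in> pcong L Rel"
proof (induction rule: pcong.induct)
  case (refl w) then show ?case by (simp add: pcong.refl)
next
  case (rel r s u v) then show ?case using pcong.rel[of r s Rel "c@u" L v] by simp
next
  case (sym a b) then show ?case by (simp add: pcong.sym)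
next
  case (trans a b c') then show ?case by (meson pcong.trans)
qed

lemma pcong_app:
  assumes pres: "pos_hom_pres L Rel"
  and "(a,b) \<in> pcong L Rel" "(c,d) \<in> pcong L Rel"
  shows "(a@c, b@d) \<in> pcong L Rel"
proof -
  have "c \<in> lists L" "b \<in> lists L" using pcong_lists[OF pres] assms by blast+
  then show ?thesis using pcong_appR[OF assms(2)] pcong_appL[OF assms(3)] pcong.trans by blast
qed

lemma mmul_cls:
  assumes pres: "pos_hom_pres L Rel" and "a \<in> lists L" "b \<in> lists L"
  shows "mmul L Rel (pcong L Rel `` {a}) (pcong L Rel `` {b}) = pcong L Rel `` {a@b}"
proof
  show "mmul L Rel (pcong L Rel `` {a}) (pcong L Rel `` {b}) \<subseteq> pcong L Rel `` {a@b}"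
  proof
    fix w assume "w \<in> mmul L Rel (pcong L Rel `` {a}) (pcong L Rel `` {b})"
    then obtain a' b' where "(a,a') \<in> pcong L Rel" "(b,b') \<in> pcong L Rel" "(a'@b', w) \<in> pcong L Rel"
      unfolding mmul_def by blast
    then have "(a@b, w) \<in> pcong L Rel" using pcong_app[OF pres] pcong.trans by metis
    then show "w \<in> pcong L Rel `` {a@b}" by simp
  qed
  show "pcong L Rel `` {a@b} \<subseteq> mmul L Rel (pcong L Rel `` {a}) (pcong L Rel `` {b})"
  proof
    fix w assume "w \<in> pcong L Rel `` {a@b}"
    hence w: "(a@b, w) \<in> pcong L Rel" by simp
    have "a \<in> pcong L Rel `` {a}" "b \<in> pcong L Rel `` {b}"
      using pcong.refl[OF assms(2)] pcong.refl[OF assms(3)] by auto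
    with w show "w \<in> mmul L Rel (pcong L Rel `` {a}) (pcong L Rel `` {b})"
      unfolding mmul_def by blast
  qed
qed

lemma Mon_cls:
  "A \<in> Mon L Rel \<Longrightarrow> \<exists>a\<in>lists L. A = pcong L Rel `` {a}"
  unfolding Mon_def by (auto elim: quotientE)

lemma cls_Mon:
  "a \<in> lists L \<Longrightarrow> pcong L Rel `` {a} \<in> Mon L Rel"
  unfolding Mon_def by (rule quotientI)

lemma mmul_Mon:
  assumes pres: "pos_hom_pres L Rel" and "A \<in> Mon L Rel" "B \<in> Mon L Rel"
  shows "mmul L Rel A B \<in> Mon L Rel"
  using Mon_cls[OF assms(2)] Mon_cls[OF assms(3)] mmul_cls[OF pres] cls_Mon
  by (metis append_in_lists_conv)

lemma mmul_assoc:
  assumes pres: "pos_hom_pres L Rel" and "A \<in> Mon L Rel" "B \<in> Mon L Rel" "C \<in> Mon L Rel"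
  shows "mmul L Rel (mmul L Rel A B) C = mmul L Rel A (mmul L Rel B C)"
proof -
  obtain a b c where abc: "a \<in> lists L" "b \<in> lists L" "c \<in> lists L"
    "A = pcong L Rel `` {a}" "B = pcong L Rel `` {b}" "C = pcong L Rel `` {c}"
    using Mon_cls[OF assms(2)] Mon_cls[OF assms(3)] Mon_cls[OF assms(4)] by blast
  show ?thesis using abc mmul_cls[OF pres] by (simp)
qed

lemma mmul_one:
  assumes pres: "pos_hom_pres L Rel" and "A \<in> Mon L Rel"
  shows "mmul L Rel A (pcong L Rel `` {[]}) = A" "mmul L Rel (pcong L Rel `` {[]}) A = A"
proof -
  obtain a where "a \<in> lists L" "A = pcong L Rel `` {a}" using Mon_cls[OF assms(2)] by blast
  then show "mmul L Rel A (pcong L Rel `` {[]}) = A" "mmul L Rel (pcong L Rel `` {[]}) A = A"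
    using mmul_cls[OF pres] by (metis lists.Nil append_Nil append_Nil2)+
qed

lemma elt_Mon:
  assumes "x \<in> Lq L Rel"
  shows "elt L Rel x \<in> Mon L Rel"
proof -
  obtain a where a: "a \<in> L" "x = letter_eq L Rel `` {a}"
    using assms unfolding Lq_def by (auto elim: quotientE)
  have "(a,a) \<in> letter_eq L Rel" unfolding letter_eq_def using a(1) by auto
  hence "a \<in> x" using a by auto
  hence s: "(SOME y. y \<in> x) \<in> x" by (rule someI)
  have "letter_eq L Rel \<subseteq> L \<times> L"
  proof -
    have "Id_on L \<union> {(a, b). a \<in> L \<and> b \<in> L \<and> (([a], [b]) \<in> Rel \<or> ([b], [a]) \<in> Rel)} \<subseteq> L \<times> L"
      by auto
    then show ?thesis unfolding letter_eq_def using trancl_subset_Sigma by blast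
  qed
  hence "(SOME y. y \<in> x) \<in> L" using s a by auto
  then show ?thesis unfolding elt_def by (intro cls_Mon) simp
qed

theorem fact3:
  fixes L :: "'a set" and Rel :: "('a list \<times> 'a list) set"
  assumes pres: "pos_hom_pres L Rel"
  shows
    "(\<forall>\<Delta> \<sigma> D. \<Delta> \<in> Mon L Rel \<and> fund_wit L Rel \<Delta> \<sigma> D \<longrightarrow>
        \<Delta> \<in> QZ L Rel \<and> qc_perm L Rel \<Delta> \<sigma>)
   \<and> (\<forall>\<Delta> \<sigma> D \<Delta>' \<sigma>'. \<Delta> \<in> Mon L Rel \<and> fund_wit L Rel \<Delta> \<sigma> D \<and>
        \<Delta>' \<in> Mon L Rel \<and> qc_perm L Rel \<Delta>' \<sigma>' \<longrightarrow>
          mmul L Rel \<Delta> \<Delta>' \<in> Fund L Rel \<and>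
          fund_wit L Rel (mmul L Rel \<Delta> \<Delta>') (\<sigma>' \<circ> \<sigma>) (\<lambda>x. mmul L Rel (D x) \<Delta>') \<and>
          mmul L Rel \<Delta>' \<Delta> \<in> Fund L Rel \<and>
          fund_wit L Rel (mmul L Rel \<Delta>' \<Delta>) (\<sigma> \<circ> \<sigma>') (\<lambda>x. mmul L Rel \<Delta>' (D (\<sigma>' x))))
   \<and> setmul L Rel (Fund L Rel) (QZ L Rel) = Fund L Rel
   \<and> setmul L Rel (QZ L Rel) (Fund L Rel) = Fund L Rel"
proof -
  let ?m = "mmul L Rel"
  let ?M = "Mon L Rel"
  let ?e = "elt L Rel"
  note as = mmul_assoc[OF pres]
  note mM = mmul_Mon[OF pres]
  have P1: "qc_perm L Rel \<Delta> \<sigma>" if "\<Delta> \<in> ?M" "fund_wit L Rel \<Delta> \<sigma> D" for \<Delta> \<sigma> D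
  proof -
    have "?m (?e x) \<Delta> = ?m \<Delta> (?e (\<sigma> x))" if x: "x \<in> Lq L Rel" for x
    proof -
      have b: "bij_betw \<sigma> (Lq L Rel) (Lq L Rel)" and
        h: "D x \<in> ?M" "\<Delta> = ?m (?e x) (D x)" "\<Delta> = ?m (D x) (?e (\<sigma> x))"
        using that \<open>fund_wit L Rel \<Delta> \<sigma> D\<close> x unfolding fund_wit_def by auto
      have sx: "\<sigma> x \<in> Lq L Rel" using b x bij_betwE by blast
      have "?m \<Delta> (?e (\<sigma> x)) = ?m (?e x) (?m (D x) (?e (\<sigma> x)))"
        using h elt_Mon[OF x] elt_Mon[OF sx] as by metis
      then show ?thesis using h by simp
    qed
    then show ?thesis using that unfolding qc_perm_def fund_wit_def by auto
  qed
  have P2: "fund_wit L Rel (?m \<Delta> \<Delta>') (\<sigma>' \<circ> \<sigma>) (\<lambda>x. ?m (D x) \<Delta>') \<and>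
          fund_wit L Rel (?m \<Delta>' \<Delta>) (\<sigma> \<circ> \<sigma>') (\<lambda>x. ?m \<Delta>' (D (\<sigma>' x)))"
    if "\<Delta> \<in> ?M" "fund_wit L Rel \<Delta> \<sigma> D" "\<Delta>' \<in> ?M" "qc_perm L Rel \<Delta>' \<sigma>'"
    for \<Delta> \<sigma> D \<Delta>' \<sigma>'
  proof -
    have b: "bij_betw \<sigma> (Lq L Rel) (Lq L Rel)" and b': "bij_betw \<sigma>' (Lq L Rel) (Lq L Rel)"
      using that unfolding fund_wit_def qc_perm_def by auto
    have q: "\<And>x. x \<in> Lq L Rel \<Longrightarrow> ?m (?e x) \<Delta>' = ?m \<Delta>' (?e (\<sigma>' x))"
      using that unfolding qc_perm_def by auto
    have f: "\<And>x. x \<in> Lq L Rel \<Longrightarrow> D x \<in> ?M \<and> \<Delta> = ?m (?e x) (D x) \<and> \<Delta> = ?m (D x) (?e (\<sigma> x))"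
      using that unfolding fund_wit_def by auto
    have A: "fund_wit L Rel (?m \<Delta> \<Delta>') (\<sigma>' \<circ> \<sigma>) (\<lambda>x. ?m (D x) \<Delta>')"
      unfolding fund_wit_def
    proof (intro conjI ballI)
      show "bij_betw (\<sigma>' \<circ> \<sigma>) (Lq L Rel) (Lq L Rel)" using b b' bij_betw_trans by blast
    next
      fix x assume x: "x \<in> Lq L Rel"
      have sx: "\<sigma> x \<in> Lq L Rel" using b x bij_betwE by blast
      have fx: "D x \<in> ?M" "\<Delta> = ?m (?e x) (D x)" "\<Delta> = ?m (D x) (?e (\<sigma> x))" using f[OF x] by auto
      note ex = elt_Mon[OF x] and esx = elt_Mon[OF sx]
      show "?m (D x) \<Delta>' \<in> ?M" using mM fx that by blast
      show "?m \<Delta> \<Delta>' = ?m (?e x) (?m (D x) \<Delta>')" using fx as ex that by metis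
      have "?m \<Delta> \<Delta>' = ?m (D x) (?m (?e (\<sigma> x)) \<Delta>')" using fx as esx that by metis
      also have "\<dots> = ?m (D x) (?m \<Delta>' (?e (\<sigma>' (\<sigma> x))))" using q[OF sx] by simp
      also have "\<dots> = ?m (?m (D x) \<Delta>') (?e ((\<sigma>' \<circ> \<sigma>) x))"
        using as fx that elt_Mon[of "\<sigma>' (\<sigma> x)"] b' sx bij_betwE by (metis comp_apply)
      finally show "?m \<Delta> \<Delta>' = ?m (?m (D x) \<Delta>') (?e ((\<sigma>' \<circ> \<sigma>) x))" .
    qed
    have B: "fund_wit L Rel (?m \<Delta>' \<Delta>) (\<sigma> \<circ> \<sigma>') (\<lambda>x. ?m \<Delta>' (D (\<sigma>' x)))"
      unfolding fund_wit_def
    proof (intro conjI ballI)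
      show "bij_betw (\<sigma> \<circ> \<sigma>') (Lq L Rel) (Lq L Rel)" using b b' bij_betw_trans by blast
    next
      fix x assume x: "x \<in> Lq L Rel"
      have sx: "\<sigma>' x \<in> Lq L Rel" using b' x bij_betwE by blast
      have fx: "D (\<sigma>' x) \<in> ?M" "\<Delta> = ?m (?e (\<sigma>' x)) (D (\<sigma>' x))"
        "\<Delta> = ?m (D (\<sigma>' x)) (?e (\<sigma> (\<sigma>' x)))" using f[OF sx] by auto
      have ssx: "\<sigma> (\<sigma>' x) \<in> Lq L Rel" using b sx bij_betwE by blast
      note ex = elt_Mon[OF x] and esx = elt_Mon[OF sx] and essx = elt_Mon[OF ssx]
      show "?m \<Delta>' (D (\<sigma>' x)) \<in> ?M" using mM fx that by blast
      have "?m (?e x) (?m \<Delta>' (D (\<sigma>' x))) = ?m (?m (?e x) \<Delta>') (D (\<sigma>' x))"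
        using as ex fx that by metis
      also have "\<dots> = ?m (?m \<Delta>' (?e (\<sigma>' x))) (D (\<sigma>' x))" using q[OF x] by simp
      also have "\<dots> = ?m \<Delta>' \<Delta>" using as esx fx that by metis
      finally show "?m \<Delta>' \<Delta> = ?m (?e x) (?m \<Delta>' (D (\<sigma>' x)))" by simp
      show "?m \<Delta>' \<Delta> = ?m (?m \<Delta>' (D (\<sigma>' x))) (?e ((\<sigma> \<circ> \<sigma>') x))"
        using as essx fx that by (metis comp_apply)
    qed
    show ?thesis using A B by blast
  qed
  have FundI: "X \<in> Fund L Rel" if "X \<in> ?M" "fund_wit L Rel X s E" for X s E
    using that unfolding Fund_def by blast
  have one: "pcong L Rel `` {[]} \<in> QZ L Rel"
  proof -
    have "qc_perm L Rel (pcong L Rel `` {[]}) id"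
      unfolding qc_perm_def by (simp add: mmul_one[OF pres] elt_Mon bij_betw_id)
    then show ?thesis unfolding QZ_def using cls_Mon[of "[]" L Rel] by auto
  qed
  have S1: "setmul L Rel (Fund L Rel) (QZ L Rel) = Fund L Rel"
  proof
    show "setmul L Rel (Fund L Rel) (QZ L Rel) \<subseteq> Fund L Rel"
    proof
      fix X assume "X \<in> setmul L Rel (Fund L Rel) (QZ L Rel)"
      then obtain \<Delta> \<Delta>' where X: "X = ?m \<Delta> \<Delta>'" "\<Delta> \<in> Fund L Rel" "\<Delta>' \<in> QZ L Rel"
        unfolding setmul_def by blast
      then obtain \<sigma> D \<sigma>' where w: "\<Delta> \<in> ?M" "fund_wit L Rel \<Delta> \<sigma> D" "\<Delta>' \<in> ?M" "qc_perm L Rel \<Delta>' \<sigma>'"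
        unfolding Fund_def QZ_def by blast
      from P2[OF w] have "fund_wit L Rel X (\<sigma>' \<circ> \<sigma>) (\<lambda>x. ?m (D x) \<Delta>') \<or> fund_wit L Rel X (\<sigma> \<circ> \<sigma>') (\<lambda>x. ?m \<Delta>' (D (\<sigma>' x)))"
        using X by blast
      moreover have "X \<in> ?M" using X w mM by blast
      ultimately show "X \<in> Fund L Rel" using FundI by blast
    qed
    show "Fund L Rel \<subseteq> setmul L Rel (Fund L Rel) (QZ L Rel)"
    proof
      fix X assume X: "X \<in> Fund L Rel"
      then have "X = ?m X (pcong L Rel `` {[]})" using mmul_one[OF pres] unfolding Fund_def by simp
      then show "X \<in> setmul L Rel (Fund L Rel) (QZ L Rel)" unfolding setmul_def using X one by blast
    qed
  qed
  have S2: "setmul L Rel (QZ L Rel) (Fund L Rel) = Fund L Rel"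
  proof
    show "setmul L Rel (QZ L Rel) (Fund L Rel) \<subseteq> Fund L Rel"
    proof
      fix X assume "X \<in> setmul L Rel (QZ L Rel) (Fund L Rel)"
      then obtain \<Delta> \<Delta>' where X: "X = ?m \<Delta>' \<Delta>" "\<Delta> \<in> Fund L Rel" "\<Delta>' \<in> QZ L Rel"
        unfolding setmul_def by blast
      then obtain \<sigma> D \<sigma>' where w: "\<Delta> \<in> ?M" "fund_wit L Rel \<Delta> \<sigma> D" "\<Delta>' \<in> ?M" "qc_perm L Rel \<Delta>' \<sigma>'"
        unfolding Fund_def QZ_def by blast
      from P2[OF w] have "fund_wit L Rel X (\<sigma>' \<circ> \<sigma>) (\<lambda>x. ?m (D x) \<Delta>') \<or> fund_wit L Rel X (\<sigma> \<circ> \<sigma>') (\<lambda>x. ?m \<Delta>' (D (\<sigma>' x)))"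
        using X by blast
      moreover have "X \<in> ?M" using X w mM by blast
      ultimately show "X \<in> Fund L Rel" using FundI by blast
    qed
    show "Fund L Rel \<subseteq> setmul L Rel (QZ L Rel) (Fund L Rel)"
    proof
      fix X assume X: "X \<in> Fund L Rel"
      then have "X = ?m (pcong L Rel `` {[]}) X" using mmul_one[OF pres] unfolding Fund_def by simp
      then show "X \<in> setmul L Rel (QZ L Rel) (Fund L Rel)" unfolding setmul_def using X one by blast
    qed
  qed
  have P3: "\<Delta> \<in> QZ L Rel" if "\<Delta> \<in> ?M" "fund_wit L Rel \<Delta> \<sigma> D" for \<Delta> \<sigma> D
    using P1[OF that] that unfolding QZ_def by blast
  have P4: "?m \<Delta> \<Delta>' \<in> Fund L Rel \<and> ?m \<Delta>' \<Delta> \<in> Fund L Rel"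
    if "\<Delta> \<in> ?M" "fund_wit L Rel \<Delta> \<sigma> D" "\<Delta>' \<in> ?M" "qc_perm L Rel \<Delta>' \<sigma>'" for \<Delta> \<sigma> D \<Delta>' \<sigma>'
    using P2[OF that] FundI mM that by blast
  show ?thesis
    apply (intro conjI allI impI)
    using P1 P2 P3 P4 S1 S2 by (simp_all, blast+)
qed

end
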